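(* Let $\gamma_1,\dots,\gamma_k$ be distinct real numbers, and for a natural number $N$ and real $x$ define \[A_N(x)=\lim_{T\to\infty}\frac1{2T}\int_{-T}^T|1+e^{it\gamma_1}+\cdots+e^{it\gamma_k}|^{2N}e^{itx}\,\mathrm dt.\] (a) $A_N(0)\gg_k(k+1)^{2N}N^{-k/2}$. (b) Let $\varepsilon>0$ and $j\in\{1,\dots,k\}$. If $N$ is large enough in terms of $\varepsilon$ and $k$, then $A_N(\gamma_j)\ge(1-\varepsilon)A_N(0)$. *)

theory Defs
  imports "HOL-Analysis.Analysis"
begin

definition expsum :: "nat \<Rightarrow> (nat \<Rightarrow> real) \<Rightarrow> real \<Rightarrow> complex" where
  "expsum k \<gamma> t = 1 + (\<Sum>j\<in>{1..k}. exp (\<i> * complex_of_real (t * \<gamma> j)))"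

definition A :: "nat \<Rightarrow> (nat \<Rightarrow> real) \<Rightarrow> nat \<Rightarrow> real \<Rightarrow> complex" where
  "A k \<gamma> N x = Lim at_top (\<lambda>T::real.
      integral {-T..T} (\<lambda>t. complex_of_real (norm (expsum k \<gamma> t) ^ (2 * N))
                                * exp (\<i> * complex_of_real (t * x)))
      / complex_of_real (2 * T))"

end

theory Submission
  imports Defs
begin

definition seqs :: "nat \<Rightarrow> nat \<Rightarrow> nat list set" where
  "seqs k N = {xs. set xs \<subseteq> {0..k} \<and> length xs = N}"

definition cnt :: "nat set \<Rightarrow> nat list \<Rightarrow> nat" where
  "cnt S xs = length (filter (\<lambda>x. x \<in> S) xs)"

lemma finite_seqs[simp]: "finite (seqs k N)"
  unfolding seqs_def by (rule finite_lists_length_eq) simp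

lemma card_seqs: "card (seqs k N) = (k+1)^N"
  unfolding seqs_def by (subst card_lists_length_eq) auto

lemma seqs_0[simp]: "seqs k 0 = {[]}"
  unfolding seqs_def by auto

lemma seqs_Suc: "seqs k (Suc N) = (\<lambda>(x,xs). x#xs) ` ({0..k} \<times> seqs k N)"
  unfolding seqs_def
  by (auto simp: image_iff length_Suc_conv)

lemma sum_seqs_Suc:
  "(\<Sum>s\<in>seqs k (Suc N). f s) = (\<Sum>x\<in>{0..k}. \<Sum>xs\<in>seqs k N. f (x#xs))"
proof -
  have inj: "inj_on (\<lambda>(x,xs). x#xs) ({0..k} \<times> seqs k N)"
    by (auto simp: inj_on_def)
  show ?thesis
    unfolding seqs_Suc sum.reindex[OF inj]
    by (simp add: sum.cartesian_product case_prod_unfold)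
qed

lemma cnt_Cons: "cnt S (x#xs) = (if x \<in> S then 1 else 0) + cnt S xs"
  unfolding cnt_def by simp

lemma exp_moment:
  fixes l :: real
  shows "(\<Sum>s\<in>seqs k N. exp (l * real (cnt S s))) =
     (\<Sum>x\<in>{0..k}. exp (l * (if x \<in> S then 1 else 0))) ^ N"
proof (induction N)
  case 0
  then show ?case by (simp add: cnt_def)
next
  case (Suc N)
  have "(\<Sum>s\<in>seqs k (Suc N). exp (l * real (cnt S s))) =
     (\<Sum>x\<in>{0..k}. \<Sum>xs\<in>seqs k N. exp (l * (if x \<in> S then 1 else 0)) * exp (l * real (cnt S xs)))"
    unfolding sum_seqs_Suc cnt_Cons by (intro sum.cong refl) (auto simp: distrib_left exp_add)
  also have "\<dots> = (\<Sum>x\<in>{0..k}. exp (l * (if x \<in> S then 1 else 0))) * (\<Sum>xs\<in>seqs k N. exp (l * real (cnt S xs)))"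
    by (simp add: sum_distrib_left sum_distrib_right sum.swap[of _ "{0..k}"])
  finally show ?case using Suc by simp
qed

lemma var_moment:
  fixes P :: real
  assumes "(\<Sum>x\<in>{0..k}. ((if x \<in> S then 1 else 0) - P)) = 0"
  shows "(\<Sum>s\<in>seqs k N. (real (cnt S s) - N * P)^2) * (1 + real k) =
     N * (\<Sum>x\<in>{0..k}. ((if x \<in> S then 1 else 0) - P)^2) * (1 + real k)^N"
proof (induction N)
  case 0
  then show ?case by (simp add: cnt_def)
next
  case (Suc N)
  define a where "a x = ((if x \<in> S then 1 else 0) - P)" for x
  have "(\<Sum>s\<in>seqs k (Suc N). (real (cnt S s) - Suc N * P)^2) =
     (\<Sum>x\<in>{0..k}. \<Sum>xs\<in>seqs k N. (a x)^2 + 2 * a x * (real (cnt S xs) - N * P) + (real (cnt S xs) - N * P)^2)"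
    unfolding sum_seqs_Suc cnt_Cons a_def by (intro sum.cong refl) (auto simp: power2_eq_square algebra_simps)
  also have "\<dots> = (\<Sum>x\<in>{0..k}. (a x)^2 * (k+1)^N + 2 * a x * (\<Sum>xs\<in>seqs k N. (real (cnt S xs) - N * P))
       + (\<Sum>xs\<in>seqs k N. (real (cnt S xs) - N * P)^2))"
    by (simp add: sum.distrib sum_distrib_left card_seqs mult.commute)
  also have "\<dots> = (\<Sum>x\<in>{0..k}. (a x)^2) * (k+1)^N + 2 * (\<Sum>x\<in>{0..k}. a x) * (\<Sum>xs\<in>seqs k N. (real (cnt S xs) - N * P))
       + (k+1) * (\<Sum>xs\<in>seqs k N. (real (cnt S xs) - N * P)^2)"
    by (simp add: sum.distrib sum_distrib_right sum_distrib_left mult.assoc sum.swap[of _ "{0..k}"])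
  also have "(\<Sum>x\<in>{0..k}. a x) = 0" using assms a_def by simp
  finally have eq: "(\<Sum>s\<in>seqs k (Suc N). (real (cnt S s) - Suc N * P)^2) = (\<Sum>x\<in>{0..k}. a x ^ 2) * (k + 1) ^ N +
    (k + 1) * (\<Sum>xs\<in>seqs k N. (real (cnt S xs) - N * P)\<^sup>2)" by simp
  show ?case unfolding eq using Suc unfolding a_def by (simp add: algebra_simps)
qed

lemma sum_ind:
  fixes c :: real and k :: nat and S :: "nat set"
  assumes "S \<subseteq> {0..k}"
  shows "(\<Sum>x\<in>{0..k}. (if x \<in> S then c else 0)) = card S * c"
proof -
  have "{0..k} \<inter> S = S" using assms by auto
  moreover have fin: "finite {0..k}" by (rule finite_atLeastAtMost)
  ultimately show ?thesis using sum.inter_restrict[OF fin, of "\<lambda>_. c" S] by simp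
qed

lemma variance_seqs:
  assumes "S \<subseteq> {0..k}"
  defines "P \<equiv> card S / (1 + real k)"
  shows "(\<Sum>s\<in>seqs k N. (real (cnt S s) - N * P)^2) = N * P * (1 - P) * (1 + real k)^N"
proof -
  have fin: "finite S" using assms(1) finite_subset by blast
  have cS: "card S \<le> k + 1" using card_mono[OF _ assms(1)] by simp
  have h1: "(\<Sum>x\<in>{0..k}. ((if x \<in> S then 1 else 0) - P)) = 0"
    using sum_ind[OF assms(1), of 1] by (simp add: sum_subtractf P_def add.commute)
  have e: "((if x \<in> S then 1 else 0) - P)^2 = (if x \<in> S then 1 - 2*P else 0) + P^2" for x
    by (auto simp: power2_eq_square algebra_simps)
  have h2: "(\<Sum>x\<in>{0..k}. ((if x \<in> S then 1 else 0) - P)^2) = (1 + real k) * P * (1 - P)"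
  proof -
    have cSP: "real (card S) = (1 + real k)*P" by (simp add: P_def add.commute)
    have "(\<Sum>x\<in>{0..k}. ((if x \<in> S then 1 else 0) - P)^2) = card S * (1 - 2*P) + (1 + real k) * P^2"
      unfolding e sum.distrib sum_ind[OF assms(1)] by simp
    also have "\<dots> = (1 + real k) * P * (1 - P)" unfolding cSP by (simp add: power2_eq_square algebra_simps)
    finally show ?thesis .
  qed
  have "(\<Sum>s\<in>seqs k N. (real (cnt S s) - N * P)^2) * (1 + real k) = N * ((1 + real k) * P * (1 - P)) * (1 + real k)^N"
    using var_moment[OF h1, of N] h2 by simp
  then show ?thesis by (simp add: add.commute mult.commute mult.left_commute)
qed

lemma chebyshev_seqs:
  fixes \<tau> :: real
  assumes "S \<subseteq> {0..k}" and "\<tau> > 0"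
  defines "P \<equiv> card S / (1 + real k)"
  shows "card {s\<in>seqs k N. (real (cnt S s) - N * P)^2 > \<tau>} * \<tau> \<le> N * (1 + real k)^N / 4"
proof -
  let ?B = "{s\<in>seqs k N. (real (cnt S s) - N * P)^2 > \<tau>}"
  have "card ?B * \<tau> = (\<Sum>s\<in>?B. \<tau>)" by simp
  also have "\<dots> \<le> (\<Sum>s\<in>?B. (real (cnt S s) - N * P)^2)"
    by (intro sum_mono) auto
  also have "\<dots> \<le> (\<Sum>s\<in>seqs k N. (real (cnt S s) - N * P)^2)"
    by (intro sum_mono2) auto
  also have "\<dots> = N * P * (1 - P) * (1 + real k)^N" using variance_seqs[OF assms(1), of N] by (simp add: P_def add.commute)
  also have "\<dots> \<le> N * (1/4) * (1 + real k)^N"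
  proof -
    have "0 \<le> (P - 1/2)^2" by simp
    then have "P * (1 - P) \<le> 1/4" by (simp add: power2_eq_square algebra_simps)
    then have "N * (P * (1 - P)) \<le> N * (1/4)" by (intro mult_left_mono) auto
    then show ?thesis by (intro mult_right_mono) (auto simp: mult.assoc)
  qed
  finally show ?thesis by simp
qed

definition chl :: "real \<Rightarrow> real" where "chl d = min 1 (d/2)"
definition chq :: "real \<Rightarrow> real" where
  "chq d = (1 + chl d + chl d * d / 2) / (1 + chl d + chl d * d)"

lemma chq_bounds: assumes "d > 0" shows "0 < chq d \<and> chq d < 1"
proof -
  have l: "chl d > 0" using assms by (simp add: chl_def)
  have "1 + chl d + chl d * d / 2 < 1 + chl d + chl d * d" using l assms by simp
  moreover have "0 < 1 + chl d + chl d * d / 2" using l assms by (simp add: add_pos_pos)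
  moreover have "0 < 1 + chl d + chl d * d" using l assms by (simp add: add_pos_pos)
  ultimately show ?thesis unfolding chq_def by (simp add: divide_less_eq_1)
qed

lemma chernoff_seqs:
  assumes "S \<subseteq> {0..k}" and "d > 0"
  defines "P \<equiv> card S / (1 + real k)"
  shows "card {s\<in>seqs k N. real (cnt S s) \<ge> N * (P + d)} \<le> chq d ^ N * (1 + real k)^N"
proof -
  define l where "l = chl d"
  have l0: "0 < l" "l \<le> 1" "l \<le> d/2" using assms(2) by (auto simp: l_def chl_def)
  have cS: "card S \<le> k + 1" using card_mono[OF _ assms(1)] by simp
  have P01: "0 \<le> P" "P \<le> 1" using cS by (auto simp: P_def)
  let ?B = "{s\<in>seqs k N. real (cnt S s) \<ge> N * (P + d)}"
  have e: "exp (l * (if x \<in> S then 1 else 0)) = 1 + (if x \<in> S then exp l - 1 else 0)" for x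
    by auto
  have "card ?B * exp (l * (N * (P + d))) = (\<Sum>s\<in>?B. exp (l * (N * (P + d))))" by simp
  also have "\<dots> \<le> (\<Sum>s\<in>?B. exp (l * real (cnt S s)))"
    using l0 by (intro sum_mono) auto
  also have "\<dots> \<le> (\<Sum>s\<in>seqs k N. exp (l * real (cnt S s)))"
    by (intro sum_mono2) auto
  also have "\<dots> = ((1 + real k) * (1 + P * (exp l - 1))) ^ N"
  proof -
    have "(\<Sum>x\<in>{0..k}. exp (l * (if x \<in> S then 1 else 0))) = (1 + real k) * (1 + P * (exp l - 1))"
      unfolding e sum.distrib sum_ind[OF assms(1)] by (simp add: P_def field_simps)
    then show ?thesis unfolding exp_moment by simp
  qed
  finally have 1: "card ?B * exp (l * (N * (P + d))) \<le> (1 + real k)^N * (1 + P * (exp l - 1)) ^ N"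
    by (simp add: power_mult_distrib)
  have "exp (l * (N * (P + d))) = exp (l * (P + d)) ^ N"
    by (simp add: exp_of_nat_mult[symmetric] algebra_simps)
  with 1 have 2: "card ?B \<le> (1 + real k)^N * ((1 + P * (exp l - 1)) / exp (l * (P + d))) ^ N"
    by (simp add: power_divide field_simps)
  have "(1 + P * (exp l - 1)) / exp (l * (P + d)) \<le> chq d"
  proof -
    have a: "exp l \<le> 1 + l + l^2" using exp_bound[of l] l0 by simp
    have b: "1 + l * (P + d) \<le> exp (l * (P + d))" using exp_ge_add_one_self by blast
    have "1 + P * (exp l - 1) \<le> 1 + P * (l + l^2)" using a P01 by (intro add_left_mono mult_left_mono) auto
    also have "\<dots> \<le> 1 + P * l + l * d / 2"
    proof -
      have "P * l^2 \<le> l^2" using P01 by (simp add: mult_left_le_one_le)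
      also have "l^2 \<le> l * d/2" using l0 by (simp add: power2_eq_square mult_left_mono)
      finally show ?thesis by (simp add: algebra_simps)
    qed
    finally have c: "1 + P * (exp l - 1) \<le> 1 + P * l + l * d / 2" .
    have pos: "0 < 1 + l * (P + d)" using l0 P01 assms(2) by (simp add: add_pos_nonneg)
    have "(1 + P * (exp l - 1)) / exp (l * (P + d)) \<le> (1 + P * l + l * d / 2) / exp (l * (P + d))"
      using c by (simp add: divide_right_mono)
    also have "\<dots> \<le> (1 + P * l + l * d / 2) / (1 + l * (P + d))"
      using b pos P01 l0 assms(2) by (intro divide_left_mono) (auto intro!: add_nonneg_nonneg mult_pos_pos)
    also have "\<dots> \<le> chq d"
    proof -
      define u v w where "u = P * l" and "v = l" and "w = l * d / 2"
      have uv: "u \<le> v" "0 \<le> u" "0 \<le> w" using P01 l0 assms(2) by (auto simp: u_def v_def w_def mult_left_le_one_le)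
      have p: "0 < 1+u+2*w" "0 < 1+v+2*w" using uv by auto
      have "(1+u+w)/(1+u+2*w) = 1 - w/(1+u+2*w)" using p by (simp add: field_simps)
      also have "\<dots> \<le> 1 - w/(1+v+2*w)" using uv p by (simp add: divide_left_mono)
      also have "\<dots> = (1+v+w)/(1+v+2*w)" using p by (simp add: field_simps)
      finally have "(1+u+w)/(1+u+2*w) \<le> (1+v+w)/(1+v+2*w)" .
      moreover have "1 + l * (P + d) = 1+u+2*w" "1 + P * l + l * d / 2 = 1+u+w"
        "chq d = (1+v+w)/(1+v+2*w)"
        by (auto simp: u_def v_def w_def chq_def l_def algebra_simps)
      ultimately show ?thesis by (simp only:)
    qed
    finally show ?thesis .
  qed
  moreover have "0 \<le> (1 + P * (exp l - 1)) / exp (l * (P + d))"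
    using P01 l0 by (intro divide_nonneg_pos) (auto intro!: add_nonneg_nonneg mult_nonneg_nonneg)
  ultimately have "((1 + P * (exp l - 1)) / exp (l * (P + d))) ^ N \<le> chq d ^ N"
    by (intro power_mono)
  then have "(1 + real k)^N * ((1 + P * (exp l - 1)) / exp (l * (P + d))) ^ N \<le> (1 + real k)^N * chq d ^ N"
    by (intro mult_left_mono) auto
  from order_trans[OF 2 this] show ?thesis by (simp add: mult.commute)
qed

definition gg :: "(nat \<Rightarrow> real) \<Rightarrow> nat \<Rightarrow> real" where
  "gg \<gamma> x = (if x = 0 then 0 else \<gamma> x)"

definition Lam :: "(nat \<Rightarrow> real) \<Rightarrow> nat list \<Rightarrow> real" where
  "Lam \<gamma> s = sum_list (map (gg \<gamma>) s)"

definition Ep :: "nat \<Rightarrow> (nat \<Rightarrow> real) \<Rightarrow> nat \<Rightarrow> real \<Rightarrow> (nat list \<times> nat list) set" where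
  "Ep k \<gamma> N x = {(s,s'). s \<in> seqs k N \<and> s' \<in> seqs k N \<and> Lam \<gamma> s - Lam \<gamma> s' + x = 0}"

lemma finite_Ep[simp]: "finite (Ep k \<gamma> N x)"
  by (rule finite_subset[of _ "seqs k N \<times> seqs k N"]) (auto simp: Ep_def)

lemma expsum_alt: "expsum k \<gamma> t = (\<Sum>x\<in>{0..k}. exp (\<i> * complex_of_real (t * gg \<gamma> x)))"
proof -
  have "{0..k} = insert 0 {1..k}" by auto
  then have "(\<Sum>x\<in>{0..k}. exp (\<i> * complex_of_real (t * gg \<gamma> x))) =
     1 + (\<Sum>x\<in>{1..k}. exp (\<i> * complex_of_real (t * gg \<gamma> x)))" by (simp add: gg_def)
  also have "(\<Sum>x\<in>{1..k}. exp (\<i> * complex_of_real (t * gg \<gamma> x))) = (\<Sum>x\<in>{1..k}. exp (\<i> * complex_of_real (t * \<gamma> x)))"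
    by (intro sum.cong) (auto simp: gg_def)
  finally show ?thesis by (simp add: expsum_def)
qed

lemma expsum_pow: "expsum k \<gamma> t ^ N = (\<Sum>s\<in>seqs k N. exp (\<i> * complex_of_real (t * Lam \<gamma> s)))"
proof (induction N)
  case 0
  then show ?case by (simp add: Lam_def)
next
  case (Suc N)
  have "expsum k \<gamma> t ^ Suc N = (\<Sum>x\<in>{0..k}. exp (\<i> * complex_of_real (t * gg \<gamma> x))) *
      (\<Sum>s\<in>seqs k N. exp (\<i> * complex_of_real (t * Lam \<gamma> s)))"
    using Suc by (simp add: expsum_alt)
  also have "\<dots> = (\<Sum>x\<in>{0..k}. \<Sum>s\<in>seqs k N. exp (\<i> * complex_of_real (t * gg \<gamma> x)) * exp (\<i> * complex_of_real (t * Lam \<gamma> s)))"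
    by (rule sum_product)
  also have "\<dots> = (\<Sum>x\<in>{0..k}. \<Sum>s\<in>seqs k N. exp (\<i> * complex_of_real (t * Lam \<gamma> (x#s))))"
    by (intro sum.cong refl) (simp add: Lam_def exp_add[symmetric] distrib_left)
  finally show ?case by (simp add: sum_seqs_Suc)
qed

lemma integrand_eq:
  "complex_of_real (norm (expsum k \<gamma> t) ^ (2 * N)) * exp (\<i> * complex_of_real (t * x)) =
   (\<Sum>p\<in>seqs k N \<times> seqs k N. exp (\<i> * complex_of_real (t * (Lam \<gamma> (fst p) - Lam \<gamma> (snd p) + x))))"
proof -
  let ?F = "expsum k \<gamma> t"
  have eq1: "complex_of_real (norm ?F ^ (2 * N)) = ?F ^ N * cnj (?F ^ N)"
  proof -
    have "complex_of_real (norm ?F ^ (2 * N)) = (complex_of_real ((norm ?F)^2))^N"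
      by (simp only: power_mult of_real_power)
    also have "\<dots> = ?F ^ N * cnj (?F ^ N)" unfolding complex_norm_square
      by (simp add: power_mult_distrib)
    finally show ?thesis .
  qed
  have eq2: "cnj (?F ^ N) = (\<Sum>s\<in>seqs k N. exp (- (\<i> * complex_of_real (t * Lam \<gamma> s))))"
    unfolding expsum_pow by (simp add: exp_cnj)
  have "complex_of_real (norm ?F ^ (2 * N)) * exp (\<i> * complex_of_real (t * x)) =
     (\<Sum>s\<in>seqs k N. exp (\<i> * complex_of_real (t * Lam \<gamma> s))) * (\<Sum>s\<in>seqs k N. exp (- (\<i> * complex_of_real (t * Lam \<gamma> s)))) * exp (\<i> * complex_of_real (t * x))"
    unfolding eq1 eq2 unfolding expsum_pow ..
  also have "\<dots> = (\<Sum>s\<in>seqs k N. \<Sum>s'\<in>seqs k N. exp (\<i> * complex_of_real (t * Lam \<gamma> s)) * exp (- (\<i> * complex_of_real (t * Lam \<gamma> s'))) * exp (\<i> * complex_of_real (t * x)))"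
    by (simp only: sum_distrib_right) (simp only: sum_distrib_left sum_distrib_right)
  also have "\<dots> = (\<Sum>s\<in>seqs k N. \<Sum>s'\<in>seqs k N. exp (\<i> * complex_of_real (t * (Lam \<gamma> s - Lam \<gamma> s' + x))))"
    by (intro sum.cong refl) (simp add: exp_add[symmetric] exp_diff algebra_simps)
  finally show ?thesis by (simp add: sum.cartesian_product case_prod_unfold)
qed

definition Iexp :: "real \<Rightarrow> real \<Rightarrow> complex" where
  "Iexp a T = (if a = 0 then complex_of_real (2 * T)
      else (exp (\<i> * complex_of_real (T * a)) - exp (\<i> * complex_of_real (-T * a))) / (\<i> * complex_of_real a))"

lemma has_integral_exp:
  assumes "0 \<le> T"
  shows "((\<lambda>t. exp (\<i> * complex_of_real (t * a))) has_integral Iexp a T) {-T..T}"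
proof (cases "a = 0")
  case True
  have "((\<lambda>t. 1::complex) has_integral (T - - T) *\<^sub>R 1) {-T..T}"
    using has_integral_const_real[of "1::complex" "-T" T] assms by simp
  moreover have "(T - - T) *\<^sub>R (1::complex) = Iexp a T" using True
    by (simp add: Iexp_def scaleR_conv_of_real)
  ultimately show ?thesis using True by simp
next
  case False
  define f where "f t = exp (t *\<^sub>R (\<i> * complex_of_real a)) / (\<i> * complex_of_real a)" for t
  have e: "t *\<^sub>R (\<i> * complex_of_real a) = \<i> * complex_of_real (t * a)" for t
    by (simp add: scaleR_conv_of_real algebra_simps)
  have "(f has_vector_derivative exp (\<i> * complex_of_real (t * a))) (at t within {-T..T})" for t
  proof -
    have "((\<lambda>t. exp (t *\<^sub>R (\<i> * complex_of_real a))) has_vector_derivative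
       exp (t *\<^sub>R (\<i> * complex_of_real a)) * (\<i> * complex_of_real a)) (at t within {-T..T})"
      by (rule exp_scaleR_has_vector_derivative_right)
    then have "(f has_vector_derivative
       exp (t *\<^sub>R (\<i> * complex_of_real a)) * (\<i> * complex_of_real a) / (\<i> * complex_of_real a)) (at t within {-T..T})"
      unfolding f_def by (intro has_vector_derivative_divide)
    then show ?thesis using False by (simp add: e)
  qed
  from fundamental_theorem_of_calculus[OF _ this] assms
  have "((\<lambda>t. exp (\<i> * complex_of_real (t * a))) has_integral f T - f (-T)) {-T..T}" by simp
  moreover have "f T - f (-T) = Iexp a T" using False
    by (simp add: f_def e Iexp_def diff_divide_distrib)
  ultimately show ?thesis by simp
qed

lemma Iexp_limit:
  "((\<lambda>T. Iexp a T / complex_of_real (2 * T)) \<longlongrightarrow> (if a = 0 then 1 else 0)) at_top"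
proof (cases "a = 0")
  case True
  have "eventually (\<lambda>T. Iexp a T / complex_of_real (2 * T) = 1) at_top"
    using eventually_gt_at_top[of 0] by eventually_elim (simp add: True Iexp_def)
  then show ?thesis using True by (simp add: tendsto_eventually)
next
  case False
  have "eventually (\<lambda>T. norm (Iexp a T / complex_of_real (2 * T)) \<le> (1 / \<bar>a\<bar>) * inverse T) at_top"
    using eventually_gt_at_top[of 0]
  proof eventually_elim
    case (elim T)
    have n1: "norm (exp (\<i> * complex_of_real r)) = 1" for r
      by (simp add: norm_exp_eq_Re)
    have "norm (exp (\<i> * complex_of_real (T * a)) - exp (\<i> * complex_of_real (-T * a))) \<le> 2"
      using norm_triangle_ineq4[of "exp (\<i> * complex_of_real (T * a))" "exp (\<i> * complex_of_real (-T * a))"]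
      by (simp add: n1)
    then have "norm (Iexp a T) \<le> 2 / \<bar>a\<bar>" using False
      by (simp add: Iexp_def norm_divide norm_mult divide_right_mono)
    then have X: "norm (Iexp a T) / (2 * T) \<le> (2 / \<bar>a\<bar>) / (2 * T)"
      by (rule divide_right_mono) (use elim in auto)
    have e1: "(1 / \<bar>a\<bar>) * inverse T = (2 / \<bar>a\<bar>) / (2 * T)" by (simp add: field_simps)
    have e2: "norm (Iexp a T / complex_of_real (2 * T)) = norm (Iexp a T) / (2 * T)"
      using elim by (simp add: norm_divide)
    show ?case unfolding e1 e2 by (rule X)
  qed
  moreover have "((\<lambda>T. (1 / \<bar>a\<bar>) * inverse T) \<longlongrightarrow> 0) at_top"
    by (intro tendsto_mult_right_zero tendsto_inverse_0_at_top filterlim_ident)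
  ultimately have "((\<lambda>T. Iexp a T / complex_of_real (2 * T)) \<longlongrightarrow> 0) at_top"
    by (rule Lim_null_comparison)
  then show ?thesis using False by simp
qed

lemma A_eq: "A k \<gamma> N x = of_nat (card (Ep k \<gamma> N x))"
proof -
  let ?P = "seqs k N \<times> seqs k N"
  let ?a = "\<lambda>p. Lam \<gamma> (fst p) - Lam \<gamma> (snd p) + x"
  have ev: "eventually (\<lambda>T. integral {-T..T} (\<lambda>t. complex_of_real (norm (expsum k \<gamma> t) ^ (2 * N))
                                * exp (\<i> * complex_of_real (t * x))) / complex_of_real (2 * T) =
      (\<Sum>p\<in>?P. Iexp (?a p) T / complex_of_real (2 * T))) at_top"
    using eventually_ge_at_top[of 0]
  proof eventually_elim
    case (elim T)
    have "((\<lambda>t. \<Sum>p\<in>?P. exp (\<i> * complex_of_real (t * ?a p))) has_integral (\<Sum>p\<in>?P. Iexp (?a p) T)) {-T..T}"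
      by (intro has_integral_sum has_integral_exp elim) auto
    then have "integral {-T..T} (\<lambda>t. complex_of_real (norm (expsum k \<gamma> t) ^ (2 * N))
                                * exp (\<i> * complex_of_real (t * x))) = (\<Sum>p\<in>?P. Iexp (?a p) T)"
      unfolding integrand_eq by (rule integral_unique)
    then show ?case by (simp add: sum_divide_distrib)
  qed
  have "((\<lambda>T. \<Sum>p\<in>?P. Iexp (?a p) T / complex_of_real (2 * T)) \<longlongrightarrow> (\<Sum>p\<in>?P. if ?a p = 0 then 1 else 0)) at_top"
    by (intro tendsto_sum Iexp_limit)
  also have "(\<Sum>p\<in>?P. if ?a p = 0 then 1 else (0::complex)) = of_nat (card (Ep k \<gamma> N x))"
  proof -
    have "(\<Sum>p\<in>?P. if ?a p = 0 then 1 else (0::complex)) = of_nat (card {p\<in>?P. ?a p = 0})"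
      by (simp add: sum.If_cases Int_def)
    also have "{p\<in>?P. ?a p = 0} = Ep k \<gamma> N x" by (auto simp: Ep_def)
    finally show ?thesis .
  qed
  finally have "((\<lambda>T. integral {-T..T} (\<lambda>t. complex_of_real (norm (expsum k \<gamma> t) ^ (2 * N))
                                * exp (\<i> * complex_of_real (t * x))) / complex_of_real (2 * T)) \<longlongrightarrow> of_nat (card (Ep k \<gamma> N x))) at_top"
    using tendsto_cong[OF ev] by simp
  then show ?thesis unfolding A_def by (intro tendsto_Lim) simp_all
qed

lemma Lam_cnt:
  assumes "set s \<subseteq> {0..k}"
  shows "Lam \<gamma> s = (\<Sum>i\<in>{1..k}. real (cnt {i} s) * \<gamma> i)"
  using assms
proof (induction s)
  case Nil
  then show ?case by (simp add: Lam_def cnt_def)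
next
  case (Cons x s)
  have x: "x \<le> k" using Cons.prems by auto
  have "(\<Sum>i\<in>{1..k}. real (cnt {i} (x#s)) * \<gamma> i) =
        (\<Sum>i\<in>{1..k}. (if i = x then \<gamma> i else 0)) + (\<Sum>i\<in>{1..k}. real (cnt {i} s) * \<gamma> i)"
  proof -
    have "(\<Sum>i\<in>{1..k}. real (cnt {i} (x#s)) * \<gamma> i) = (\<Sum>i\<in>{1..k}. (if i = x then \<gamma> i else 0) + real (cnt {i} s) * \<gamma> i)"
      by (intro sum.cong refl) (auto simp: cnt_Cons distrib_right)
    then show ?thesis by (simp only: sum.distrib)
  qed
  also have "(\<Sum>i\<in>{1..k}. (if i = x then \<gamma> i else 0)) = gg \<gamma> x"
    using x by (auto simp: gg_def sum.delta)
  finally show ?case using Cons by (simp add: Lam_def)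
qed

lemma card_real_interval:
  fixes A :: "nat set"
  assumes "finite A" "\<And>a. a \<in> A \<Longrightarrow> lo \<le> real a \<and> real a \<le> hi" "lo \<le> hi"
  shows "real (card A) \<le> hi - lo + 1"
proof (cases "A = {}")
  case True
  then show ?thesis using assms by simp
next
  case False
  have "A \<subseteq> {Min A..Max A}" using assms(1) by auto
  then have "card A \<le> card {Min A..Max A}" by (intro card_mono) auto
  also have "\<dots> = Max A + 1 - Min A" by simp
  finally have c1: "card A \<le> Max A + 1 - Min A" .
  have "Min A \<le> Max A" using Min_in[OF assms(1) False] Max_ge[OF assms(1)] by blast
  then have "real (Max A + 1 - Min A) = real (Max A) + 1 - real (Min A)" by (simp add: of_nat_diff)
  with c1 have "real (card A) \<le> real (Max A) + 1 - real (Min A)"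
    by (metis of_nat_le_iff)
  moreover have "real (Max A) \<le> hi" "lo \<le> real (Min A)"
    using assms(2)[OF Max_in[OF assms(1) False]] assms(2)[OF Min_in[OF assms(1) False]] by auto
  ultimately show ?thesis by linarith
qed

definition cv :: "nat \<Rightarrow> nat list \<Rightarrow> nat \<Rightarrow> nat" where
  "cv k s = restrict (\<lambda>i. cnt {i} s) {1..k}"

lemma partA_aux:
  assumes N: "N \<ge> 1"
  shows "real (card (Ep k \<gamma> N 0)) * sqrt N ^ k \<ge>
     (9/16) / (2 * sqrt k + 1) ^ k * (1 + real k) ^ (2 * N)"
proof -
  define pP where "pP = 1 / (1 + real k)"
  define Good where "Good = {s\<in>seqs k N. \<forall>i\<in>{1..k}. (real (cnt {i} s) - N * pP)^2 \<le> k * N}"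
  define Bad where "Bad i = {s\<in>seqs k N. (real (cnt {i} s) - N * pP)^2 > k * N}" for i
  have Gfin: "finite Good" by (simp add: Good_def)
  have GB: "seqs k N - Good = (\<Union>i\<in>{1..k}. Bad i)" by (auto simp: Good_def Bad_def)
  have cardGood: "real (card Good) \<ge> 3/4 * (1 + real k) ^ N"
  proof (cases "k = 0")
    case True
    then have "Good = seqs k N" by (auto simp: Good_def)
    then show ?thesis by (simp add: card_seqs)
  next
    case False
    have "card (Bad i) * (k * N) \<le> N * (1 + real k)^N / 4" if "i \<in> {1..k}" for i
    proof -
      have "{i} \<subseteq> {0..k}" using that by auto
      from chebyshev_seqs[OF this, of "k * N" N] show ?thesis using False N
        by (simp add: Bad_def pP_def)
    qed
    then have cb: "card (Bad i) \<le> (1 + real k)^N / (4 * k)" if "i \<in> {1..k}" for i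
      using that False N by (simp add: field_simps)
    have "card (seqs k N - Good) \<le> (\<Sum>i\<in>{1..k}. card (Bad i))" unfolding GB by (rule card_UN_le) simp
    then have "real (card (seqs k N - Good)) \<le> (\<Sum>i\<in>{1..k}. real (card (Bad i)))"
      by (metis of_nat_le_iff of_nat_sum)
    also have "\<dots> \<le> (\<Sum>i\<in>{1..k}. (1 + real k)^N / (4 * k))" by (intro sum_mono cb)
    also have "\<dots> = (1 + real k)^N / 4" using False by simp
    finally have "real (card (seqs k N - Good)) \<le> (1 + real k)^N / 4" .
    moreover have "card (seqs k N - Good) = card (seqs k N) - card Good"
      by (rule card_Diff_subset) (auto simp: Good_def)
    moreover have "card Good \<le> card (seqs k N)" by (rule card_mono) (auto simp: Good_def)
    ultimately show ?thesis by (simp add: card_seqs of_nat_diff)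
  qed
  define W where "W = {a::nat. (real a - N * pP)^2 \<le> k * N}"
  have Wb: "a \<in> W \<Longrightarrow> N * pP - sqrt (k * N) \<le> real a \<and> real a \<le> N * pP + sqrt (k * N)" for a
  proof -
    assume "a \<in> W"
    then have h: "(real a - N * pP)^2 \<le> k * N" by (simp add: W_def)
    have "\<bar>real a - N * pP\<bar>^2 \<le> k * N" using h by simp
    then have "\<bar>real a - N * pP\<bar> \<le> sqrt (k * N)" by (rule real_le_rsqrt)
    then show ?thesis by linarith
  qed
  have Wfin: "finite W"
  proof -
    have "a \<le> nat \<lceil>N * pP + sqrt (k * N)\<rceil>" if "a \<in> W" for a
    proof -
      have "real a \<le> N * pP + sqrt (k * N)" using Wb[OF that] by simp
      then show ?thesis by linarith
    qed
    then have "W \<subseteq> {..nat \<lceil>N * pP + sqrt (k * N)\<rceil>}" by auto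
    then show ?thesis by (rule finite_subset) simp
  qed
  have cW: "real (card W) \<le> 2 * sqrt k * sqrt N + 1"
  proof -
    have "real (card W) \<le> (N * pP + sqrt (k * N)) - (N * pP - sqrt (k * N)) + 1"
    proof (rule card_real_interval[OF Wfin Wb])
      have "0 \<le> sqrt (k * N)" by simp
      then show "N * pP - sqrt (k * N) \<le> N * pP + sqrt (k * N)" by linarith
    qed
    then show ?thesis by (simp add: real_sqrt_mult mult_ac)
  qed
  define V where "V = cv k ` Good"
  have VW: "V \<subseteq> PiE {1..k} (\<lambda>_. W)"
  proof
    fix v assume "v \<in> V"
    then obtain s where s: "s \<in> Good" "v = cv k s" by (auto simp: V_def)
    show "v \<in> PiE {1..k} (\<lambda>_. W)" unfolding s(2) cv_def
      using s(1) by (simp add: Good_def W_def)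
  qed
  have cV: "real (card V) \<le> (2 * sqrt k + 1) ^ k * sqrt N ^ k"
  proof -
    have "card V \<le> card (PiE {1..k} (\<lambda>_. W))" using VW Wfin by (intro card_mono) (auto intro: finite_PiE)
    also have "\<dots> = card W ^ k" by (simp add: card_PiE)
    finally have "real (card V) \<le> real (card W) ^ k" by (metis of_nat_le_iff of_nat_power)
    also have "\<dots> \<le> (2 * sqrt k * sqrt N + 1) ^ k" using cW by (intro power_mono) auto
    also have "\<dots> \<le> ((2 * sqrt k + 1) * sqrt N) ^ k"
    proof -
      have "1 \<le> sqrt N" using N by simp
      then have "2 * sqrt k * sqrt N + 1 \<le> (2 * sqrt k + 1) * sqrt N" by (simp add: algebra_simps)
      then show ?thesis by (intro power_mono) auto
    qed
    finally show ?thesis by (simp add: power_mult_distrib)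
  qed
  define fib where "fib v = {s\<in>Good. cv k s = v}" for v
  define Q where "Q = (SIGMA s:Good. fib (cv k s))"
  have QE: "Q \<subseteq> Ep k \<gamma> N 0"
  proof
    fix p assume "p \<in> Q"
    then obtain s s' where p: "p = (s,s')" "s \<in> Good" "s' \<in> Good" "cv k s' = cv k s"
      by (auto simp: Q_def fib_def)
    have "cnt {i} s' = cnt {i} s" if "i \<in> {1..k}" for i
      using p(4) that unfolding cv_def by (metis restrict_apply')
    then have "Lam \<gamma> s = Lam \<gamma> s'" using p(2,3)
      by (auto simp: Lam_cnt Good_def seqs_def intro!: sum.cong)
    then show "p \<in> Ep k \<gamma> N 0" using p by (auto simp: Ep_def Good_def)
  qed
  have cQ: "card Q = (\<Sum>v\<in>V. card (fib v) ^ 2)"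
  proof -
    have "card Q = (\<Sum>s\<in>Good. card (fib (cv k s)))"
      unfolding Q_def using Gfin by (simp add: fib_def)
    also have "\<dots> = (\<Sum>v\<in>V. \<Sum>s\<in>fib v. card (fib (cv k s)))"
      unfolding V_def fib_def by (rule sum.image_gen[OF Gfin])
    also have "\<dots> = (\<Sum>v\<in>V. card (fib v) ^ 2)"
      by (intro sum.cong refl) (simp add: fib_def power2_eq_square)
    finally show ?thesis .
  qed
  have sfib: "(\<Sum>v\<in>V. real (card (fib v))) = real (card Good)"
  proof -
    have "card Good = (\<Sum>v\<in>V. card (fib v))"
      using card_eq_sum[of Good] sum.image_gen[OF Gfin, of "\<lambda>_. 1::nat" "cv k"]
      by (simp add: V_def fib_def)
    then show ?thesis by (metis of_nat_sum)
  qed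
  have Vfin: "finite V" using Gfin by (simp add: V_def)
  have CS: "real (card Good) ^ 2 \<le> real (card V) * real (card Q)"
  proof -
    have "(\<Sum>v\<in>V. 1 * real (card (fib v)))^2 \<le> (\<Sum>v\<in>V. 1^2) * (\<Sum>v\<in>V. real (card (fib v))^2)"
      by (rule Cauchy_Schwarz_ineq_sum)
    then show ?thesis using sfib cQ by (simp add: of_nat_sum)
  qed
  have Vpos: "real (card V) > 0"
  proof -
    have "(0::real) < (1 + real k)^N" by (simp add: add_pos_nonneg)
    then have "Good \<noteq> {}" using cardGood by (metis card.empty of_nat_0 not_le mult_pos_pos zero_less_divide_iff zero_less_numeral)
    then have "V \<noteq> {}" by (simp add: V_def)
    then show ?thesis using Vfin by (simp add: card_gt_0_iff)
  qed
  have "(9/16) * (1 + real k) ^ (2 * N) = (3/4 * (1 + real k) ^ N)^2" by (simp add: power2_eq_square power_mult power_mult_distrib)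
  also have "\<dots> \<le> real (card Good) ^ 2" using cardGood by (intro power_mono) auto
  also have "\<dots> \<le> real (card V) * real (card Q)" by (rule CS)
  also have "\<dots> \<le> real (card V) * real (card (Ep k \<gamma> N 0))"
    using QE Vpos by (intro mult_left_mono) (auto intro: card_mono)
  also have "\<dots> \<le> (2 * sqrt k + 1) ^ k * sqrt N ^ k * real (card (Ep k \<gamma> N 0))"
    using cV by (intro mult_right_mono) auto
  finally have "(9/16) * (1 + real k) ^ (2 * N) \<le> (2 * sqrt k + 1) ^ k * (real (card (Ep k \<gamma> N 0)) * sqrt N ^ k)"
    by (simp add: mult_ac)
  moreover have Bpos: "0 < (2 * sqrt k + 1) ^ k" by (simp add: add_nonneg_pos)
  ultimately have "(9/16) * (1 + real k) ^ (2 * N) / (2 * sqrt k + 1) ^ k \<le> real (card (Ep k \<gamma> N 0)) * sqrt N ^ k"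
    by (simp add: pos_divide_le_eq mult_ac)
  then show ?thesis by (simp add: mult.commute)
qed

lemma Lam_update:
  "l < length s \<Longrightarrow> Lam \<gamma> (s[l:=v]) = Lam \<gamma> s - gg \<gamma> (s!l) + gg \<gamma> v"
proof (induction s arbitrary: l)
  case Nil
  then show ?case by simp
next
  case (Cons x s)
  then show ?case by (cases l) (auto simp: Lam_def)
qed

lemma cnt_split: "set s \<subseteq> {0..k} \<Longrightarrow> cnt {0} s + cnt {1..k} s = length s"
  by (induction s) (auto simp: cnt_def)

lemma cnt_le_length: "cnt S s \<le> length s"
  by (simp add: cnt_def)

lemma cnt_card: "cnt {v} s = card {l. l < length s \<and> s ! l = v}"
  unfolding cnt_def by (simp add: length_filter_conv_card)

lemma fiber_sq: "real (card {s\<in>seqs k N. Lam \<gamma> s = \<mu>}) \<le> sqrt (card (Ep k \<gamma> N 0))"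
proof -
  let ?S = "{s\<in>seqs k N. Lam \<gamma> s = \<mu>}"
  have m: "(a,b) \<in> Ep k \<gamma> N 0" if "a \<in> ?S" "b \<in> ?S" for a b using that by (simp add: Ep_def)
  have "?S \<times> ?S \<subseteq> Ep k \<gamma> N 0" using m by blast
  then have "card (?S \<times> ?S) \<le> card (Ep k \<gamma> N 0)" by (intro card_mono finite_Ep)
  then have "card ?S * card ?S \<le> card (Ep k \<gamma> N 0)" by (simp only: card_cartesian_product)
  then have "real (card ?S * card ?S) \<le> real (card (Ep k \<gamma> N 0))" by (simp only: of_nat_le_iff)
  then have "real (card ?S) ^ 2 \<le> real (card (Ep k \<gamma> N 0))" by (simp add: power2_eq_square)
  then show ?thesis by (rule real_le_rsqrt)
qed

lemma snd_in_B:
  assumes "B \<subseteq> seqs k N"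
  shows "real (card {p\<in>Ep k \<gamma> N x. snd p \<in> B}) \<le> card B * sqrt (card (Ep k \<gamma> N 0))"
proof -
  have Bfin: "finite B" using assms by (rule finite_subset) simp
  let ?F = "\<lambda>s'. {s\<in>seqs k N. Lam \<gamma> s = Lam \<gamma> s' - x}"
  have "{p\<in>Ep k \<gamma> N x. snd p \<in> B} \<subseteq> (\<lambda>(s',s). (s,s')) ` (SIGMA s':B. ?F s')"
  proof
    fix p assume p: "p \<in> {p\<in>Ep k \<gamma> N x. snd p \<in> B}"
    obtain s s' where ps: "p = (s,s')" by (cases p)
    have h: "s \<in> seqs k N" "s' \<in> B" "Lam \<gamma> s - Lam \<gamma> s' + x = 0" using p unfolding ps Ep_def by auto
    have "(s', s) \<in> (SIGMA s':B. ?F s')" using h by simp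
    then show "p \<in> (\<lambda>(s',s). (s,s')) ` (SIGMA s':B. ?F s')" unfolding ps by (rule rev_image_eqI) simp
  qed
  then have "card {p\<in>Ep k \<gamma> N x. snd p \<in> B} \<le> card ((\<lambda>(s',s). (s,s')) ` (SIGMA s':B. ?F s'))"
    by (intro card_mono) (auto intro!: finite_imageI finite_SigmaI Bfin)
  also have "\<dots> \<le> card (SIGMA s':B. ?F s')" by (rule card_image_le) (auto intro!: finite_SigmaI Bfin)
  also have "\<dots> = (\<Sum>s'\<in>B. card (?F s'))" using Bfin by simp
  finally have "real (card {p\<in>Ep k \<gamma> N x. snd p \<in> B}) \<le> real (\<Sum>s'\<in>B. card (?F s'))"
    by (simp only: of_nat_le_iff)
  then have "real (card {p\<in>Ep k \<gamma> N x. snd p \<in> B}) \<le> (\<Sum>s'\<in>B. real (card (?F s')))"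
    by (simp add: of_nat_sum)
  also have "\<dots> \<le> (\<Sum>s'\<in>B. sqrt (card (Ep k \<gamma> N 0)))" by (intro sum_mono fiber_sq)
  finally show ?thesis by simp
qed

lemma transfer:
  assumes j: "j \<in> {1..k}"
  shows "(\<Sum>p\<in>Ep k \<gamma> N 0. real (cnt {0} (snd p))) \<le> (\<Sum>p\<in>Ep k \<gamma> N (\<gamma> j). real (cnt {j} (snd p)))"
proof -
  define T0 where "T0 = (SIGMA p:Ep k \<gamma> N 0. {l. l < N \<and> snd p ! l = 0})"
  define Tj where "Tj = (SIGMA p:Ep k \<gamma> N (\<gamma> j). {l. l < N \<and> snd p ! l = j})"
  define f where "f = (\<lambda>(p::nat list \<times> nat list, l::nat). ((fst p, (snd p)[l:=j]), l))"
  have len: "p \<in> Ep k \<gamma> N x \<Longrightarrow> length (snd p) = N" for p x by (auto simp: Ep_def seqs_def)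
  have c0: "card T0 = (\<Sum>p\<in>Ep k \<gamma> N 0. cnt {0} (snd p))"
    unfolding T0_def by (subst card_SigmaI) (auto intro!: sum.cong simp: cnt_card len)
  have cj: "card Tj = (\<Sum>p\<in>Ep k \<gamma> N (\<gamma> j). cnt {j} (snd p))"
    unfolding Tj_def by (subst card_SigmaI) (auto intro!: sum.cong simp: cnt_card len)
  have inj: "inj_on f T0"
  proof (rule inj_onI)
    fix a b assume a: "a \<in> T0" and b: "b \<in> T0" and e: "f a = f b"
    obtain s s' l where A: "a = ((s,s'),l)" by (metis prod.collapse)
    obtain t t' m where B: "b = ((t,t'),m)" by (metis prod.collapse)
    from e have st: "s = t" "l = m" "s'[l:=j] = t'[m:=j]" by (auto simp: f_def A B)
    have "s' ! l = 0" "t' ! m = 0" using a b by (auto simp: T0_def A B)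
    then have "s' = t'" using st(3) unfolding st(2) by (metis list_update_id list_update_overwrite)
    then show "a = b" using A B st by simp
  qed
  have sub: "f ` T0 \<subseteq> Tj"
  proof
    fix y assume "y \<in> f ` T0"
    then obtain s s' l where y: "y = ((s, s'[l:=j]), l)" and m: "((s,s'),l) \<in> T0"
      by (auto simp: f_def)
    from m have s: "s \<in> seqs k N" "s' \<in> seqs k N" "Lam \<gamma> s - Lam \<gamma> s' = 0" "l < N" "s' ! l = 0"
      by (auto simp: T0_def Ep_def)
    have "s'[l:=j] \<in> seqs k N" using s(2) j by (auto simp: seqs_def dest: set_update_subset_insert[THEN subsetD])
    moreover have "Lam \<gamma> (s'[l:=j]) = Lam \<gamma> s' + \<gamma> j"
      using s(2,4,5) j by (simp add: Lam_update seqs_def gg_def)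
    moreover have "s'[l:=j] ! l = j" using s(2,4) by (simp add: seqs_def)
    ultimately show "y \<in> Tj" using s y j by (auto simp: Tj_def Ep_def)
  qed
  have "card T0 \<le> card Tj"
  proof -
    have "finite Tj" unfolding Tj_def by (intro finite_SigmaI) auto
    then show ?thesis using card_inj_on_le[OF inj sub] by simp
  qed
  then have "real (card T0) \<le> real (card Tj)" by simp
  then show ?thesis unfolding c0 cj by (simp add: of_nat_sum)
qed

lemma partB_ineq:
  assumes j: "j \<in> {1..k}" and N: "N \<ge> 1" and \<delta>: "0 < \<delta>" "\<delta> \<le> 1"
  shows "(1-\<delta>) * real (card (Ep k \<gamma> N 0)) - (real k + 2) * (chq (\<delta>/(1+real k)) ^ N * (1+real k)^N) * sqrt (card (Ep k \<gamma> N 0))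
     \<le> (1+\<delta>) * real (card (Ep k \<gamma> N (\<gamma> j)))"
proof -
  define K where "K = 1 + real k"
  define \<beta> where "\<beta> = chq (\<delta>/K) ^ N * K^N"
  define E0 where "E0 = real (card (Ep k \<gamma> N 0))"
  define Ej where "Ej = real (card (Ep k \<gamma> N (\<gamma> j)))"
  define r where "r = sqrt E0"
  define d where "d = \<delta> / K"
  have K: "K > 0" by (simp add: K_def add_pos_nonneg)
  have d: "d > 0" using K \<delta> by (simp add: d_def)
  have Npos: "real N > 0" using N by simp
  define B0 where "B0 = {s\<in>seqs k N. real N * (card {1..k} / (1 + real k) + d) \<le> real (cnt {1..k} s)}"
  define Bj where "Bj = {s\<in>seqs k N. real N * (card {j} / (1 + real k) + d) \<le> real (cnt {j} s)}"
  have cB0: "real (card B0) \<le> \<beta>"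
    using chernoff_seqs[of "{1..k}" k d N] d by (simp add: B0_def \<beta>_def K_def d_def)
  have cBj: "real (card Bj) \<le> \<beta>"
    using chernoff_seqs[of "{j}" k d N] d j by (simp add: Bj_def \<beta>_def K_def d_def)
  have B0s: "B0 \<subseteq> seqs k N" and Bjs: "Bj \<subseteq> seqs k N" by (auto simp: B0_def Bj_def)
  define c where "c = (real N / K) * (1 - \<delta>)"
  define c' where "c' = (real N / K) * (1 + \<delta>)"
  have low: "c - (if snd p \<in> B0 then c else 0) \<le> real (cnt {0} (snd p))" if p: "p \<in> Ep k \<gamma> N 0" for p
  proof (cases "snd p \<in> B0")
    case True
    then show ?thesis by simp
  next
    case False
    have s: "snd p \<in> seqs k N" using p by (auto simp: Ep_def)
    then have split: "cnt {0} (snd p) + cnt {1..k} (snd p) = N" using cnt_split[of "snd p" k] by (simp add: seqs_def)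
    have "real (cnt {1..k} (snd p)) < real N * (real k / K + d)" using False s by (simp add: B0_def K_def)
    moreover have "real (cnt {0} (snd p)) = real N - real (cnt {1..k} (snd p))" using split by (simp flip: split)
    moreover have "real N * (real k / K + d) = real N - c"
    proof -
      have 1: "real N * (real k / K + d) = real N * (real k + \<delta>) / K" by (simp add: d_def add_divide_distrib[symmetric])
      have 2: "real N - c = real N * (K - (1 - \<delta>)) / K" using K by (simp add: c_def field_simps)
      have 3: "K - (1 - \<delta>) = real k + \<delta>" by (simp add: K_def)
      show ?thesis unfolding 1 2 3 ..
    qed
    ultimately show ?thesis using False by simp
  qed
  have up: "real (cnt {j} (snd p)) \<le> c' + (if snd p \<in> Bj then real N else 0)" if p: "p \<in> Ep k \<gamma> N (\<gamma> j)" for p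
  proof (cases "snd p \<in> Bj")
    case True
    have "real (cnt {j} (snd p)) \<le> real N" using p cnt_le_length[of "{j}" "snd p"] by (auto simp: Ep_def seqs_def)
    moreover have "c' \<ge> 0" using K \<delta> by (simp add: c'_def)
    ultimately show ?thesis using True by simp
  next
    case False
    have s: "snd p \<in> seqs k N" using p by (auto simp: Ep_def)
    have "real (cnt {j} (snd p)) < real N * (1 / K + d)" using False s by (simp add: Bj_def K_def)
    moreover have "real N * (1 / K + d) = c'" using K by (simp add: c'_def d_def field_simps)
    ultimately show ?thesis using False by simp
  qed
  define X0 where "X0 = real (card {p\<in>Ep k \<gamma> N 0. snd p \<in> B0})"
  define Xj where "Xj = real (card {p\<in>Ep k \<gamma> N (\<gamma> j). snd p \<in> Bj})"
  have sum_if: "(\<Sum>p\<in>Ep k \<gamma> N x. (if snd p \<in> B then a else 0)) = a * real (card {p\<in>Ep k \<gamma> N x. snd p \<in> B})" for x B and a :: real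
    using sum.inter_filter[OF finite_Ep, of "\<lambda>_. a" k \<gamma> N x "\<lambda>p. snd p \<in> B"] by (simp add: mult.commute)
  have "c * E0 - c * X0 = (\<Sum>p\<in>Ep k \<gamma> N 0. c - (if snd p \<in> B0 then c else 0))"
    by (simp add: sum_subtractf sum_if E0_def X0_def)
  also have "\<dots> \<le> (\<Sum>p\<in>Ep k \<gamma> N 0. real (cnt {0} (snd p)))" by (intro sum_mono low)
  also have "\<dots> \<le> (\<Sum>p\<in>Ep k \<gamma> N (\<gamma> j). real (cnt {j} (snd p)))" by (rule transfer[OF j])
  also have "\<dots> \<le> (\<Sum>p\<in>Ep k \<gamma> N (\<gamma> j). c' + (if snd p \<in> Bj then real N else 0))" by (intro sum_mono up)
  also have "\<dots> = c' * Ej + real N * Xj" by (simp add: sum.distrib sum_if Ej_def Xj_def)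
  finally have main: "c * E0 - c * X0 \<le> c' * Ej + real N * Xj" .
  have e1: "(real N / K) * ((1-\<delta>) * E0 - (1-\<delta>) * X0) = c * E0 - c * X0"
    by (simp only: c_def algebra_simps)
  have e2: "(real N / K) * ((1+\<delta>) * Ej + K * Xj) = c' * Ej + (real N / K * K) * Xj"
    by (simp only: c'_def algebra_simps)
  have e3: "real N / K * K = real N" using K by simp
  have "(real N / K) * ((1-\<delta>) * E0 - (1-\<delta>) * X0) \<le> (real N / K) * ((1+\<delta>) * Ej + K * Xj)"
    unfolding e1 e2 e3 by (rule main)
  then have main2: "(1-\<delta>) * E0 - (1-\<delta>) * X0 \<le> (1+\<delta>) * Ej + K * Xj"
    by (rule mult_left_le_imp_le) (use K Npos in simp)
  have E0nn: "E0 \<ge> 0" by (simp add: E0_def)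
  have X0b: "X0 \<le> \<beta> * r"
  proof -
    have "X0 \<le> real (card B0) * r" unfolding X0_def r_def E0_def by (rule snd_in_B[OF B0s])
    also have "\<dots> \<le> \<beta> * r" using cB0 by (intro mult_right_mono) (auto simp: r_def E0_def)
    finally show ?thesis .
  qed
  have Xjb: "Xj \<le> \<beta> * r"
  proof -
    have "Xj \<le> real (card Bj) * r" unfolding Xj_def r_def E0_def by (rule snd_in_B[OF Bjs])
    also have "\<dots> \<le> \<beta> * r" using cBj by (intro mult_right_mono) (auto simp: r_def E0_def)
    finally show ?thesis .
  qed
  have X0nn: "X0 \<ge> 0" by (simp add: X0_def)
  have "(1-\<delta>) * X0 \<le> X0" using \<delta> X0nn by (simp add: mult_left_le_one_le)
  moreover have "K * Xj \<le> K * (\<beta> * r)" using Xjb K by simp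
  ultimately have "(1-\<delta>) * X0 + K * Xj \<le> (real k + 2) * \<beta> * r"
    using X0b by (simp add: K_def algebra_simps)
  with main2 have "(1-\<delta>) * E0 - (real k + 2) * \<beta> * r \<le> (1+\<delta>) * Ej" by linarith
  then show ?thesis by (simp add: E0_def Ej_def r_def \<beta>_def K_def)
qed

lemma poly_geom_limit:
  fixes q :: real
  assumes "0 < q" "q < 1"
  shows "(\<lambda>n. real n ^ k * q ^ n) \<longlonglongrightarrow> 0"
proof -
  define a where "a = - ln q"
  have a: "a > 0" using assms by (simp add: a_def)
  have f: "filterlim (\<lambda>n. a * real n) at_top sequentially"
    using a by (intro filterlim_tendsto_pos_mult_at_top[OF tendsto_const a filterlim_real_sequentially])
  have "(\<lambda>n. (a * real n) ^ k / exp (a * real n)) \<longlonglongrightarrow> 0"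
    using filterlim_compose[OF tendsto_power_div_exp_0 f] by (simp add: o_def)
  then have "(\<lambda>n. ((a * real n) ^ k / exp (a * real n)) / a ^ k) \<longlonglongrightarrow> 0 / a ^ k"
    by (intro tendsto_divide tendsto_const) (use a in auto)
  moreover have "((a * real n) ^ k / exp (a * real n)) / a ^ k = real n ^ k * q ^ n" for n
  proof -
    have e: "exp (real n * ln q) = q ^ n" using assms by (simp add: exp_of_nat_mult)
    have "exp (a * real n) = inverse (exp (real n * ln q))"
      by (simp add: a_def exp_minus[symmetric] mult.commute)
    then have "exp (a * real n) = inverse (q ^ n)" using e by simp
    then show ?thesis using a assms by (simp add: power_mult_distrib field_simps)
  qed
  ultimately show ?thesis by simp
qed

lemma partB_final:
  assumes "0 < \<epsilon>"
  shows "\<exists>N0. \<forall>\<gamma>. \<forall>j\<in>{1..k}. \<forall>N\<ge>N0.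
     (1 - \<epsilon>) * real (card (Ep k \<gamma> N 0)) \<le> real (card (Ep k \<gamma> N (\<gamma> j)))"
proof -
  define e where "e = min \<epsilon> 1 / 3"
  have e: "0 < e" "e \<le> 1" "3 * e \<le> \<epsilon>" using assms by (auto simp: e_def min_def)
  define K where "K = 1 + real k"
  have K: "K > 0" by (simp add: K_def add_pos_nonneg)
  define q where "q = chq (e / K)"
  have q: "0 < q" "q < 1" using chq_bounds[of "e / K"] e K by (auto simp: q_def)
  define c0 where "c0 = (9/16) / (2 * sqrt k + 1) ^ k"
  have c0: "c0 > 0" by (simp add: c0_def add_nonneg_pos)
  define M where "M = e^2 * c0 / (real k + 2)^2"
  have M: "M > 0" using e c0 by (simp add: M_def)
  have "(\<lambda>n. real n ^ k * (q^2) ^ n) \<longlonglongrightarrow> 0"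
    by (rule poly_geom_limit) (use q in \<open>auto simp: power_less_one_iff\<close>)
  then have "eventually (\<lambda>n. real n ^ k * (q^2) ^ n < M) sequentially"
    using M by (rule order_tendstoD)
  then obtain N1 where N1: "\<And>n. n \<ge> N1 \<Longrightarrow> real n ^ k * (q^2) ^ n < M"
    by (auto simp: eventually_sequentially)
  show ?thesis
  proof (intro exI[of _ "max N1 1"] allI ballI impI)
    fix \<gamma> :: "nat \<Rightarrow> real" and j N
    assume j: "j \<in> {1..k}" and NN: "max N1 1 \<le> N"
    have N: "N \<ge> 1" "N \<ge> N1" using NN by auto
    define E0 where "E0 = real (card (Ep k \<gamma> N 0))"
    define Ej where "Ej = real (card (Ep k \<gamma> N (\<gamma> j)))"
    define \<beta> where "\<beta> = q ^ N * K ^ N"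
    have A: "E0 * sqrt N ^ k \<ge> c0 * K ^ (2 * N)"
      using partA_aux[OF N(1), of k \<gamma>] by (simp add: E0_def c0_def K_def)
    have sN: "0 < sqrt N ^ k" using N by simp
    have sle: "sqrt (real N) \<le> real N"
    proof -
      have "real N \<le> real (N * N)" by (simp only: of_nat_le_iff le_square)
      then have "real N \<le> real N ^ 2" by (simp add: power2_eq_square)
      then have "sqrt (real N) \<le> sqrt (real N ^ 2)" by (rule real_sqrt_le_mono)
      then show ?thesis by simp
    qed
    have sN2: "sqrt N ^ k \<le> real N ^ k" using sle by (intro power_mono) auto
    have Kp: "0 < K ^ (2 * N)" using K by simp
    have E0pos: "E0 > 0"
    proof -
      have "0 < c0 * K ^ (2 * N)" using c0 Kp by simp
      then have "0 < E0 * sqrt N ^ k" using A by linarith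
      then show ?thesis using sN by (simp add: zero_less_mult_iff)
    qed
    have B: "((real k + 2) * \<beta>)^2 \<le> (e * sqrt E0)^2"
    proof -
      have "((real k + 2) * \<beta>)^2 = (real k + 2)^2 * (q^2)^N * K^(2*N)"
        by (simp add: \<beta>_def power_mult_distrib power_mult[symmetric] mult.commute)
      also have "\<dots> * c0 \<le> (real k + 2)^2 * (q^2)^N * (E0 * sqrt N ^ k)"
        using A by (simp add: mult.assoc mult_left_mono mult.commute[of c0])
      finally have 1: "((real k + 2) * \<beta>)^2 * c0 \<le> (real k + 2)^2 * ((q^2)^N * sqrt N ^ k) * E0"
        by (simp add: mult_ac)
      have "(q^2)^N * sqrt N ^ k \<le> real N ^ k * (q^2)^N"
        using sN2 q by (simp add: mult.commute mult_left_mono)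
      also have "\<dots> \<le> M" using N1[OF N(2)] by simp
      finally have "(real k + 2)^2 * ((q^2)^N * sqrt N ^ k) * E0 \<le> (real k + 2)^2 * M * E0"
        using E0pos by (intro mult_right_mono mult_left_mono) auto
      also have "\<dots> = e^2 * c0 * E0" by (simp add: M_def)
      finally have "((real k + 2) * \<beta>)^2 * c0 \<le> e^2 * E0 * c0" using 1 by (simp add: mult_ac)
      then have "((real k + 2) * \<beta>)^2 \<le> e^2 * E0" using c0 by simp
      then show ?thesis using E0pos by (simp add: power_mult_distrib)
    qed
    have X: "(real k + 2) * \<beta> \<le> e * sqrt E0"
      by (rule power2_le_imp_le[OF B]) (use e E0pos in simp)
    have "(real k + 2) * \<beta> * sqrt E0 \<le> e * sqrt E0 * sqrt E0" by (rule mult_right_mono[OF X]) (simp add: E0_def)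
    also have "\<dots> = e * E0" using E0pos by (simp add: mult.assoc)
    finally have C: "(real k + 2) * \<beta> * sqrt E0 \<le> e * E0" .
    have D: "(1-e) * E0 - (real k + 2) * \<beta> * sqrt E0 \<le> (1+e) * Ej"
      using partB_ineq[OF j N(1) e(1) e(2), of \<gamma>] by (simp add: E0_def Ej_def \<beta>_def K_def q_def)
    have "(1+e) * ((1 - 3*e) * E0) \<le> (1 - 2*e) * E0"
    proof -
      have "(1+e) * (1 - 3*e) \<le> 1 - 2*e" by (simp add: algebra_simps)
      then show ?thesis using E0pos by (simp add: mult.assoc[symmetric] mult_right_mono)
    qed
    also have "\<dots> \<le> (1+e) * Ej" using C D by (simp add: algebra_simps)
    finally have "(1 - 3*e) * E0 \<le> Ej" using e by simp
    moreover have "(1 - \<epsilon>) * E0 \<le> (1 - 3*e) * E0" using e E0pos by (intro mult_right_mono) auto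
    ultimately show "(1 - \<epsilon>) * real (card (Ep k \<gamma> N 0)) \<le> real (card (Ep k \<gamma> N (\<gamma> j)))"
      by (simp add: E0_def Ej_def)
  qed
qed

theorem lemma4p2:
  shows "(\<forall>k::nat. \<exists>c>0. \<forall>\<gamma>::nat \<Rightarrow> real. inj_on \<gamma> {1..k} \<longrightarrow>
            (\<forall>N::nat. N \<ge> 1 \<longrightarrow>
               Re (A k \<gamma> N 0) \<ge> c * (real k + 1) ^ (2 * N) * real N powr (- real k / 2)))
       \<and> (\<forall>k::nat. \<forall>\<epsilon>::real. \<epsilon> > 0 \<longrightarrow> (\<exists>N0::nat. \<forall>\<gamma>::nat \<Rightarrow> real. inj_on \<gamma> {1..k} \<longrightarrow>
            (\<forall>j\<in>{1..k}. \<forall>N\<ge>N0. Re (A k \<gamma> N (\<gamma> j)) \<ge> (1 - \<epsilon>) * Re (A k \<gamma> N 0))))"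
proof (intro conjI allI impI)
  fix k :: nat
  define c0 where "c0 = (9/16) / (2 * sqrt k + 1) ^ k"
  have c0: "c0 > 0" by (simp add: c0_def add_nonneg_pos)
  show "\<exists>c>0. \<forall>\<gamma>::nat \<Rightarrow> real. inj_on \<gamma> {1..k} \<longrightarrow>
            (\<forall>N::nat. N \<ge> 1 \<longrightarrow>
               Re (A k \<gamma> N 0) \<ge> c * (real k + 1) ^ (2 * N) * real N powr (- real k / 2))"
  proof (intro exI[of _ c0] conjI allI impI c0)
    fix \<gamma> :: "nat \<Rightarrow> real" and N :: nat
    assume N: "N \<ge> 1"
    have A: "real (card (Ep k \<gamma> N 0)) * sqrt N ^ k \<ge> c0 * (1 + real k) ^ (2 * N)"
      using partA_aux[OF N, of k \<gamma>] by (simp add: c0_def)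
    have sN: "0 < sqrt N ^ k" using N by simp
    have pw: "real N powr (- real k / 2) = inverse (sqrt N ^ k)"
    proof -
      have "sqrt N ^ k = sqrt N powr real k" using N by (simp add: powr_realpow)
      also have "\<dots> = (real N powr (1/2)) powr real k" by (simp add: powr_half_sqrt)
      also have "\<dots> = real N powr (real k / 2)" by (simp add: powr_powr)
      finally show ?thesis by (simp add: powr_minus)
    qed
    have "c0 * (real k + 1) ^ (2 * N) * real N powr (- real k / 2) = c0 * (1 + real k) ^ (2 * N) / sqrt N ^ k"
    proof -
      have kk: "real k + 1 = 1 + real k" by simp
      show ?thesis unfolding pw kk by (simp add: divide_inverse)
    qed
    also have "\<dots> \<le> real (card (Ep k \<gamma> N 0))" using A sN by (simp add: pos_divide_le_eq)
    finally show "c0 * (real k + 1) ^ (2 * N) * real N powr (- real k / 2) \<le> Re (A k \<gamma> N 0)"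
      by (simp add: A_eq)
  qed
next
  fix k :: nat and \<epsilon> :: real
  assume "\<epsilon> > 0"
  from partB_final[OF this, of k] obtain N0 where
    N0: "\<forall>\<gamma>. \<forall>j\<in>{1..k}. \<forall>N\<ge>N0. (1 - \<epsilon>) * real (card (Ep k \<gamma> N 0)) \<le> real (card (Ep k \<gamma> N (\<gamma> j)))"
    ..
  show "\<exists>N0::nat. \<forall>\<gamma>::nat \<Rightarrow> real. inj_on \<gamma> {1..k} \<longrightarrow>
            (\<forall>j\<in>{1..k}. \<forall>N\<ge>N0. Re (A k \<gamma> N (\<gamma> j)) \<ge> (1 - \<epsilon>) * Re (A k \<gamma> N 0))"
  proof (intro exI[of _ N0] allI impI ballI)
    fix \<gamma> :: "nat \<Rightarrow> real" and j N
    assume "j \<in> {1..k}" "N0 \<le> N"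
    then have "(1 - \<epsilon>) * real (card (Ep k \<gamma> N 0)) \<le> real (card (Ep k \<gamma> N (\<gamma> j)))" using N0 by blast
    then show "(1 - \<epsilon>) * Re (A k \<gamma> N 0) \<le> Re (A k \<gamma> N (\<gamma> j))" by (simp add: A_eq)
  qed
qed

end
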